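(* Assume the activation and data assumptions below, and that Conditions 1 and 2 hold for the metric $G$. Let $0<\eta\alpha<2$. Then for sufficiently large $M$, with high probability, for all $t\ge0$, $$\|g(\theta_t)\|_2\le\Big(|1-\eta\alpha|+\tfrac{A'}{\sqrt M}\Big)^tR_0,\qquad \sum_{j=1}^t\|\theta_j-\theta_{j-1}\|_2\le AR_0\sum_{j=1}^t\Big(|1-\eta\alpha|+\tfrac{A'}{\sqrt M}\Big)^{j-1}\le\frac{2AR_0}{1-|1-\eta\alpha|},$$ where $A'=4KA^2R_0/(1-|1-\eta\alpha|)$.
   Context: Network: for $l=1,\dots,L$, $u_l=\frac{\sigma_w}{\sqrt{M_{l-1}}}W_lh_{l-1}+\sigma_b b_l$, $h_l=\phi(u_l)$, $h_0=x\in\mathbb{R}^{M_0}$; hidden widths $M_l=\alpha_lM$ ($\alpha_l>0$, $l<L$), $M_L=C$; output $f_\theta=u_L$; $\theta\in\mathbb{R}^P$ all parameters; initialization $\theta_0$ with all entries i.i.d. $\mathcal{N}(0,1)$. Assumption on activation: $\phi$ locally Lipschitz and non-polynomial, $\phi'$ locally Lipschitz. Assumption on data: training inputs $x_1,\dots,x_N$ with $\|x_n\|_2=1$ and $x_n\ne x_{n'}$ for $n\neq n'$; labels $y\in\mathbb{R}^{CN}$; loss $\mathcal{L}(\theta)=\frac1{2N}\|y-f_\theta(x)\|^2$ where $f_\theta(x)\in\mathbb{R}^{CN}$ concatenates outputs on training inputs. $J(\theta)=\nabla_\theta f_\theta(x)$ ($CN\times P$), $J_t=J(\theta_t)$; $g(\theta):=f_\theta(x)-y$.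 $G(\theta)$ is a $P\times P$ metric matrix (an approximate Fisher information computed on the training inputs), $G_t=G(\theta_t)$, and NGD is $\theta_{t+1}=\theta_t-\eta G_t^{-1}\nabla_\theta\mathcal{L}(\theta_t)$ (inverses taken in the zero-damping sense). $B(\theta_0,D)=\{\theta:\|\theta-\theta_0\|_2<D\}$; $\bar\eta=\eta/N$; $\|\cdot\|_2$ on matrices is the spectral norm. $K>0$ is a constant such that for large $M$ and every $D>0$, with high probability $\|J(\theta)\|_F\le K$ and $\|J(\theta)-J(\tilde\theta)\|_F\le K\|\theta-\tilde\theta\|_2/\sqrt M$ for all $\theta,\tilde\theta\in B(\theta_0,D)$ (such a constant exists under these assumptions). $R_0>0$ is a constant with $\|g(\theta_0)\|_2<R_0$ with high probability. Condition 1 (isotropic condition): at initialization $J_0G_0^{-1}J_0^\top/N=\alpha I$ for a constant $\alpha>0$. Condition 2: there is $A>0$ such that for large $M$ and every $D>0$, with high probability, $\bar\eta\|G(\theta_s)^{-1}J(\theta_s)^\top\|_2\le A$ and $\bar\eta\|G_0^{-1}J_0^\top-G(\theta_s)^{-1}J(\theta_s)^\top\|_2\le A\|\theta_s-\theta_0\|_2/\sqrt M$ for all $\theta_s\in B(\theta_0,D)$. "With high probability" means with probability tending to $1$ as $M\to\infty$. *)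

theory Defs
  imports "HOL-Analysis.Analysis" "HOL-Probability.Probability"
    "HOL-Computational_Algebra.Polynomial"
begin

(* Parameter indices: weight entry (W_l)_{ij} and bias entry (b_l)_i. *)
datatype pidx = Wi nat nat nat | Bi nat nat

definition vnorm :: "'i set \<Rightarrow> ('i \<Rightarrow> real) \<Rightarrow> real" where
  "vnorm I v = sqrt (\<Sum>i\<in>I. (v i)\<^sup>2)"

definition mvmul :: "'j set \<Rightarrow> ('i \<Rightarrow> 'j \<Rightarrow> real) \<Rightarrow> ('j \<Rightarrow> real) \<Rightarrow> 'i \<Rightarrow> real" where
  "mvmul J A v = (\<lambda>i. \<Sum>j\<in>J. A i j * v j)"

definition frob :: "'i set \<Rightarrow> 'j set \<Rightarrow> ('i \<Rightarrow> 'j \<Rightarrow> real) \<Rightarrow> real" where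
  "frob I J A = sqrt (\<Sum>i\<in>I. \<Sum>j\<in>J. (A i j)\<^sup>2)"

definition opnorm :: "'i set \<Rightarrow> 'j set \<Rightarrow> ('i \<Rightarrow> 'j \<Rightarrow> real) \<Rightarrow> real" where
  "opnorm I J A = Sup {vnorm I (mvmul J A v) | v. vnorm J v \<le> 1}"

definition locally_lipschitz :: "(real \<Rightarrow> real) \<Rightarrow> bool" where
  "locally_lipschitz f \<longleftrightarrow> (\<forall>x. \<exists>e>0. \<exists>C. C-lipschitz_on (ball x e) f)"

definition activation_ok :: "(real \<Rightarrow> real) \<Rightarrow> bool" where
  "activation_ok \<phi> \<longleftrightarrow>
     locally_lipschitz \<phi> \<and>
     \<not> (\<exists>p :: real poly. \<forall>x. \<phi> x = poly p x) \<and>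
     (\<forall>x. \<phi> differentiable at x) \<and>
     locally_lipschitz (deriv \<phi>)"

definition width :: "nat \<Rightarrow> nat \<Rightarrow> nat \<Rightarrow> (nat \<Rightarrow> real) \<Rightarrow> nat \<Rightarrow> nat \<Rightarrow> nat" where
  "width M0 C L \<alpha> M l =
     (if l = 0 then M0 else if l < L then nat \<lceil>\<alpha> l * real M\<rceil> else C)"

definition params :: "nat \<Rightarrow> (nat \<Rightarrow> nat) \<Rightarrow> pidx set" where
  "params L w =
     {Wi l i j | l i j. 1 \<le> l \<and> l \<le> L \<and> i < w l \<and> j < w (l - 1)}
     \<union> {Bi l i | l i. 1 \<le> l \<and> l \<le> L \<and> i < w l}"

definition preact :: "(real \<Rightarrow> real) \<Rightarrow> real \<Rightarrow> real \<Rightarrow> (nat \<Rightarrow> nat) \<Rightarrow>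
    (pidx \<Rightarrow> real) \<Rightarrow> nat \<Rightarrow> (nat \<Rightarrow> real) \<Rightarrow> nat \<Rightarrow> real" where
  "preact \<phi> \<sigma>w \<sigma>b w \<theta> l h i =
     \<sigma>w / sqrt (real (w (l - 1))) * (\<Sum>j<w (l - 1). \<theta> (Wi l i j) * h j) + \<sigma>b * \<theta> (Bi l i)"

fun hidden :: "(real \<Rightarrow> real) \<Rightarrow> real \<Rightarrow> real \<Rightarrow> (nat \<Rightarrow> nat) \<Rightarrow>
    (pidx \<Rightarrow> real) \<Rightarrow> (nat \<Rightarrow> real) \<Rightarrow> nat \<Rightarrow> nat \<Rightarrow> real" where
  "hidden \<phi> \<sigma>w \<sigma>b w \<theta> x 0 = x"
| "hidden \<phi> \<sigma>w \<sigma>b w \<theta> x (Suc l) =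
     (\<lambda>i. \<phi> (preact \<phi> \<sigma>w \<sigma>b w \<theta> (Suc l) (hidden \<phi> \<sigma>w \<sigma>b w \<theta> x l) i))"

definition netout :: "(real \<Rightarrow> real) \<Rightarrow> real \<Rightarrow> real \<Rightarrow> (nat \<Rightarrow> nat) \<Rightarrow> nat \<Rightarrow>
    (pidx \<Rightarrow> real) \<Rightarrow> (nat \<Rightarrow> real) \<Rightarrow> nat \<Rightarrow> real" where
  "netout \<phi> \<sigma>w \<sigma>b w L \<theta> x =
     preact \<phi> \<sigma>w \<sigma>b w \<theta> L (hidden \<phi> \<sigma>w \<sigma>b w \<theta> x (L - 1))"

definition outs :: "nat \<Rightarrow> nat \<Rightarrow> (nat \<times> nat) set" where
  "outs N C = {..<N} \<times> {..<C}"

definition fvec :: "(real \<Rightarrow> real) \<Rightarrow> real \<Rightarrow> real \<Rightarrow> (nat \<Rightarrow> nat) \<Rightarrow> nat \<Rightarrow>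
    (nat \<Rightarrow> nat \<Rightarrow> real) \<Rightarrow> (pidx \<Rightarrow> real) \<Rightarrow> nat \<times> nat \<Rightarrow> real" where
  "fvec \<phi> \<sigma>w \<sigma>b w L xs \<theta> = (\<lambda>(n, c). netout \<phi> \<sigma>w \<sigma>b w L \<theta> (xs n) c)"

definition jac :: "((pidx \<Rightarrow> real) \<Rightarrow> 'k \<Rightarrow> real) \<Rightarrow> (pidx \<Rightarrow> real) \<Rightarrow> 'k \<Rightarrow> pidx \<Rightarrow> real" where
  "jac F \<theta> k p = deriv (\<lambda>s. F (\<theta>(p := s)) k) (\<theta> p)"

(* (G + rho I)^{-1} J^T for rho > 0: the unique P x CN matrix X (zero outside the index sets)
   with (G + rho I) X = J^T *)
definition damped_solve :: "pidx set \<Rightarrow> 'k set \<Rightarrow> (pidx \<Rightarrow> pidx \<Rightarrow> real) \<Rightarrow>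
    ('k \<Rightarrow> pidx \<Rightarrow> real) \<Rightarrow> real \<Rightarrow> pidx \<Rightarrow> 'k \<Rightarrow> real" where
  "damped_solve PI OI G J \<rho> = (THE X.
      (\<forall>p k. (p \<notin> PI \<or> k \<notin> OI) \<longrightarrow> X p k = 0) \<and>
      (\<forall>p\<in>PI. \<forall>k\<in>OI. (\<Sum>q\<in>PI. (G p q + (if p = q then \<rho> else 0)) * X q k) = J k p))"

(* G^{-1} J^T in the zero-damping sense: lim_{rho -> 0+} (G + rho I)^{-1} J^T *)
definition ginvJT :: "pidx set \<Rightarrow> 'k set \<Rightarrow> (pidx \<Rightarrow> pidx \<Rightarrow> real) \<Rightarrow>
    ('k \<Rightarrow> pidx \<Rightarrow> real) \<Rightarrow> pidx \<Rightarrow> 'k \<Rightarrow> real" where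
  "ginvJT PI OI G J = (\<lambda>p k. Lim (at_right 0) (\<lambda>\<rho>. damped_solve PI OI G J \<rho> p k))"

(* NGD iterates: theta_{t+1} = theta_t - eta G_t^{-1} grad L(theta_t),
   with grad L(theta) = J(theta)^T g(theta) / N *)
primrec ngd :: "pidx set \<Rightarrow> 'k set \<Rightarrow> nat \<Rightarrow> real \<Rightarrow> ((pidx \<Rightarrow> real) \<Rightarrow> 'k \<Rightarrow> real) \<Rightarrow>
    ((pidx \<Rightarrow> real) \<Rightarrow> 'k \<Rightarrow> real) \<Rightarrow> ((pidx \<Rightarrow> real) \<Rightarrow> pidx \<Rightarrow> pidx \<Rightarrow> real) \<Rightarrow>
    (pidx \<Rightarrow> real) \<Rightarrow> nat \<Rightarrow> pidx \<Rightarrow> real" where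
  "ngd PI OI N \<eta> F g G \<theta>0 0 = \<theta>0"
| "ngd PI OI N \<eta> F g G \<theta>0 (Suc t) =
     (let \<theta> = ngd PI OI N \<eta> F g G \<theta>0 t in
      (\<lambda>p. \<theta> p - \<eta> * (\<Sum>k\<in>OI. ginvJT PI OI (G \<theta>) (jac F \<theta>) p k * g \<theta> k) / real N))"

definition whp :: "(nat \<Rightarrow> (pidx \<Rightarrow> real) measure) \<Rightarrow> (nat \<Rightarrow> (pidx \<Rightarrow> real) \<Rightarrow> bool) \<Rightarrow> bool" where
  "whp \<mu> P \<longleftrightarrow> (\<exists>E. (\<forall>M. E M \<in> sets (\<mu> M)) \<and>
       ((\<lambda>M. measure (\<mu> M) (E M)) \<longlonglongrightarrow> 1) \<and>
       (\<forall>\<^sub>F M in sequentially. \<forall>\<theta>0\<in>E M. P M \<theta>0))"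

definition init_law :: "pidx set \<Rightarrow> (pidx \<Rightarrow> real) measure" where
  "init_law PI = PiM PI (\<lambda>_. density lborel std_normal_density)"

end

theory Submission
  imports Defs
begin

lemma vnorm_L2: "vnorm I v = L2_set v I"
  by (simp add: vnorm_def L2_set_def)

lemma vnorm_nonneg: "0 \<le> vnorm I v"
  by (simp add: vnorm_L2)

lemma vnorm_triangle: "vnorm I (\<lambda>i. a i + b i) \<le> vnorm I a + vnorm I b"
  unfolding vnorm_L2 by (rule L2_set_triangle_ineq)

lemma vnorm_scale: "vnorm I (\<lambda>i. c * a i) = \<bar>c\<bar> * vnorm I a"
proof -
  have "vnorm I (\<lambda>i. c * a i) = vnorm I (\<lambda>i. \<bar>c\<bar> * a i)"
    unfolding vnorm_def by (simp add: power_mult_distrib)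
  also have "\<dots> = \<bar>c\<bar> * vnorm I a"
    unfolding vnorm_L2 by (simp add: L2_set_right_distrib)
  finally show ?thesis .
qed

lemma vnorm_cong: "(\<And>i. i \<in> I \<Longrightarrow> a i = b i) \<Longrightarrow> vnorm I a = vnorm I b"
  unfolding vnorm_def by simp

lemma cs: "\<bar>\<Sum>i\<in>I. a i * b i\<bar> \<le> vnorm I a * vnorm I b"
proof -
  have "\<bar>\<Sum>i\<in>I. a i * b i\<bar> \<le> (\<Sum>i\<in>I. \<bar>a i\<bar> * \<bar>b i\<bar>)"
    unfolding abs_mult[symmetric] by (rule sum_abs)
  also have "\<dots> \<le> vnorm I a * vnorm I b"
    unfolding vnorm_L2 by (rule L2_set_mult_ineq)
  finally show ?thesis .
qed

lemma frob_L2: "frob I J A = L2_set (\<lambda>i. vnorm J (A i)) I"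
  unfolding frob_def L2_set_def vnorm_def
  by (simp add: sum_nonneg)

lemma frob_nonneg: "0 \<le> frob I J A"
  by (simp add: frob_def sum_nonneg)

lemma mv_frob: "vnorm I (mvmul J A v) \<le> frob I J A * vnorm J v"
proof -
  have "vnorm I (mvmul J A v) = vnorm I (\<lambda>i. \<bar>mvmul J A v i\<bar>)"
    by (simp add: vnorm_def)
  also have "\<dots> \<le> L2_set (\<lambda>i. vnorm J (A i) * vnorm J v) I"
    unfolding vnorm_L2[of I]
    apply (rule L2_set_mono)
    using cs[where I=J] by (auto simp: mvmul_def)
  also have "\<dots> = frob I J A * vnorm J v"
    by (simp add: frob_L2 L2_set_left_distrib vnorm_nonneg)
  finally show ?thesis .
qed

lemma mvmul_scale: "mvmul J A (\<lambda>j. v j / n) = (\<lambda>i. mvmul J A v i / n)"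
  by (simp add: mvmul_def sum_divide_distrib)

lemma mv_op:
  assumes "finite J"
  shows "vnorm I (mvmul J A v) \<le> opnorm I J A * vnorm J v"
proof -
  let ?S = "{vnorm I (mvmul J A v) | v. vnorm J v \<le> 1}"
  have bdd: "bdd_above ?S"
  proof (rule bdd_aboveI)
    fix x assume "x \<in> ?S"
    then obtain u where "x = vnorm I (mvmul J A u)" "vnorm J u \<le> 1" by auto
    then show "x \<le> frob I J A"
      using mv_frob[of I J A u] frob_nonneg[of I J A] mult_left_mono[of "vnorm J u" 1 "frob I J A"]
      by simp
  qed
  have le: "vnorm I (mvmul J A u) \<le> opnorm I J A" if "vnorm J u \<le> 1" for u
    unfolding opnorm_def using that bdd by (intro cSup_upper) auto
  show ?thesis
  proof (cases "vnorm J v = 0")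
    case True
    then have "\<forall>j\<in>J. v j = 0" using assms by (simp add: vnorm_L2 L2_set_eq_0_iff)
    then have "mvmul J A v = (\<lambda>i. 0)" by (simp add: mvmul_def)
    then show ?thesis using True by (simp add: vnorm_def)
  next
    case False
    let ?n = "vnorm J v"
    have n: "?n > 0" using False vnorm_nonneg[of J v] by linarith
    have e1: "(\<lambda>j. v j / ?n) = (\<lambda>j. (1 / ?n) * v j)" by (simp add: fun_eq_iff)
    have "vnorm J (\<lambda>j. (1 / ?n) * v j) = \<bar>1 / ?n\<bar> * ?n" by (rule vnorm_scale)
    also have "\<dots> = 1" using n by simp
    finally have "vnorm J (\<lambda>j. v j / ?n) \<le> 1" unfolding e1 by simp
    then have "vnorm I (mvmul J A (\<lambda>j. v j / ?n)) \<le> opnorm I J A" by (rule le)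
    then have h: "vnorm I (\<lambda>i. mvmul J A v i / ?n) \<le> opnorm I J A"
      by (simp only: mvmul_scale)
    have eq2: "(\<lambda>i. mvmul J A v i / ?n) = (\<lambda>i. (1 / ?n) * mvmul J A v i)" by (simp add: fun_eq_iff)
    have "vnorm I (\<lambda>i. (1 / ?n) * mvmul J A v i) \<le> opnorm I J A" using h unfolding eq2 .
    then have "\<bar>1 / ?n\<bar> * vnorm I (mvmul J A v) \<le> opnorm I J A"
      by (simp only: vnorm_scale)
    then have "(1 / ?n) * vnorm I (mvmul J A v) \<le> opnorm I J A"
      using n by simp
    then show ?thesis using n by (simp add: field_simps)
  qed
qed

lemma prob_init: "prob_space (init_law PI)"
  unfolding init_law_def
  by (auto intro!: prob_space_PiM prob_space_normal_density)

lemma whp_conj: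
  assumes ps: "\<And>M. prob_space (\<mu> M)" and "whp \<mu> P" and "whp \<mu> Q"
  shows "whp \<mu> (\<lambda>M \<theta>. P M \<theta> \<and> Q M \<theta>)"
proof -
  obtain E1 where E1: "\<forall>M. E1 M \<in> sets (\<mu> M)" "(\<lambda>M. measure (\<mu> M) (E1 M)) \<longlonglongrightarrow> 1"
    "\<forall>\<^sub>F M in sequentially. \<forall>\<theta>0\<in>E1 M. P M \<theta>0" using assms(2) unfolding whp_def by blast
  obtain E2 where E2: "\<forall>M. E2 M \<in> sets (\<mu> M)" "(\<lambda>M. measure (\<mu> M) (E2 M)) \<longlonglongrightarrow> 1"
    "\<forall>\<^sub>F M in sequentially. \<forall>\<theta>0\<in>E2 M. Q M \<theta>0" using assms(3) unfolding whp_def by blast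
  have lo: "measure (\<mu> M) (E1 M) + measure (\<mu> M) (E2 M) - 1 \<le> measure (\<mu> M) (E1 M \<inter> E2 M)"
     and hi: "measure (\<mu> M) (E1 M \<inter> E2 M) \<le> 1" for M
  proof -
    interpret prob_space "\<mu> M" by (rule ps)
    have s1: "E1 M \<in> sets (\<mu> M)" "E2 M \<in> sets (\<mu> M)" using E1(1) E2(1) by auto
    have u1: "measure (\<mu> M) (E1 M \<union> (E2 M - E1 M)) = measure (\<mu> M) (E1 M) + measure (\<mu> M) (E2 M - E1 M)"
      using s1 by (intro finite_measure_Union) auto
    have u2: "measure (\<mu> M) ((E2 M - E1 M) \<union> (E1 M \<inter> E2 M)) = measure (\<mu> M) (E2 M - E1 M) + measure (\<mu> M) (E1 M \<inter> E2 M)"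
      using s1 by (intro finite_measure_Union) auto
    have "E1 M \<union> (E2 M - E1 M) = E1 M \<union> E2 M" "(E2 M - E1 M) \<union> (E1 M \<inter> E2 M) = E2 M" by auto
    then have "measure (\<mu> M) (E1 M \<union> E2 M) = measure (\<mu> M) (E1 M) + measure (\<mu> M) (E2 M) - measure (\<mu> M) (E1 M \<inter> E2 M)"
      using u1 u2 by simp
    moreover have "measure (\<mu> M) (E1 M \<union> E2 M) \<le> 1" by (rule prob_le_1)
    ultimately show "measure (\<mu> M) (E1 M) + measure (\<mu> M) (E2 M) - 1 \<le> measure (\<mu> M) (E1 M \<inter> E2 M)" by simp
    show "measure (\<mu> M) (E1 M \<inter> E2 M) \<le> 1" by (rule prob_le_1)
  qed
  have t: "(\<lambda>M. measure (\<mu> M) (E1 M) + measure (\<mu> M) (E2 M) - 1) \<longlonglongrightarrow> 1 + 1 - 1"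
    by (intro tendsto_intros E1(2) E2(2))
  have "(\<lambda>M. measure (\<mu> M) (E1 M \<inter> E2 M)) \<longlonglongrightarrow> 1"
    apply (rule tendsto_sandwich[OF _ _ _ tendsto_const])
    using lo hi t by auto
  moreover have "\<forall>\<^sub>F M in sequentially. \<forall>\<theta>0\<in>E1 M \<inter> E2 M. P M \<theta>0 \<and> Q M \<theta>0"
    using eventually_conj[OF E1(3) E2(3)] by (auto elim: eventually_mono)
  ultimately show ?thesis unfolding whp_def using E1(1) E2(1)
    by (intro exI[of _ "\<lambda>M. E1 M \<inter> E2 M"]) auto
qed

lemma whp_mono:
  assumes "whp \<mu> P" and "\<forall>\<^sub>F M in sequentially. \<forall>\<theta>. P M \<theta> \<longrightarrow> Q M \<theta>"
  shows "whp \<mu> Q"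
proof -
  obtain E where E: "\<forall>M. E M \<in> sets (\<mu> M)" "(\<lambda>M. measure (\<mu> M) (E M)) \<longlonglongrightarrow> 1"
    "\<forall>\<^sub>F M in sequentially. \<forall>\<theta>0\<in>E M. P M \<theta>0" using assms(1) unfolding whp_def by blast
  have "\<forall>\<^sub>F M in sequentially. \<forall>\<theta>0\<in>E M. Q M \<theta>0"
    using eventually_conj[OF E(3) assms(2)] by (auto elim: eventually_mono)
  then show ?thesis unfolding whp_def using E by blast
qed

definition lin :: "(pidx \<Rightarrow> real) \<Rightarrow> (pidx \<Rightarrow> real) \<Rightarrow> real \<Rightarrow> pidx \<Rightarrow> real" where
  "lin \<theta> v s = (\<lambda>p. \<theta> p + s * v p)"

definition LD :: "pidx set \<Rightarrow> ((pidx \<Rightarrow> real) \<Rightarrow> real) \<Rightarrow> ((pidx \<Rightarrow> real) \<Rightarrow> pidx \<Rightarrow> real) \<Rightarrow> bool" where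
  "LD P f Df \<longleftrightarrow> (\<forall>\<theta> v. ((\<lambda>s. f (lin \<theta> v s)) has_real_derivative (\<Sum>p\<in>P. Df \<theta> p * v p)) (at 0))"

definition LDx :: "pidx set \<Rightarrow> ((pidx \<Rightarrow> real) \<Rightarrow> real) \<Rightarrow> bool" where
  "LDx P f \<longleftrightarrow> (\<exists>Df. LD P f Df)"

lemma lin0[simp]: "lin \<theta> v 0 = \<theta>"
  by (simp add: lin_def)

lemma LD_const: "LDx P (\<lambda>\<theta>. c)"
  unfolding LDx_def LD_def by (rule exI[of _ "\<lambda>\<theta> p. 0"]) simp

lemma LD_coord:
  assumes "finite P" "q \<in> P"
  shows "LDx P (\<lambda>\<theta>. \<theta> q)"
  unfolding LDx_def LD_def
proof (intro exI[of _ "\<lambda>\<theta> p. if p = q then 1 else 0"] allI)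
  fix \<theta> v :: "pidx \<Rightarrow> real"
  have "(\<Sum>p\<in>P. (if p = q then 1 else 0) * v p) = (\<Sum>p\<in>P. (if p = q then v q else 0))"
    by (rule sum.cong) auto
  also have "\<dots> = v q" using assms by simp
  finally have e: "(\<Sum>p\<in>P. (if p = q then 1 else 0) * v p) = v q" .
  have "((\<lambda>s. \<theta> q + s * v q) has_real_derivative (0 + 1 * v q)) (at 0)"
    by (auto intro!: derivative_eq_intros)
  then show "((\<lambda>s. lin \<theta> v s q) has_real_derivative (\<Sum>p\<in>P. (if p = q then 1 else 0) * v p)) (at 0)"
    unfolding e lin_def by simp
qed

lemma LD_add:
  assumes "LDx P f" "LDx P g"
  shows "LDx P (\<lambda>\<theta>. f \<theta> + g \<theta>)"
proof -
  obtain Df Dg where f: "LD P f Df" and g: "LD P g Dg" using assms unfolding LDx_def by blast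
  show ?thesis unfolding LDx_def LD_def
  proof (intro exI[of _ "\<lambda>\<theta> p. Df \<theta> p + Dg \<theta> p"] allI)
    fix \<theta> v :: "pidx \<Rightarrow> real"
    have "((\<lambda>s. f (lin \<theta> v s) + g (lin \<theta> v s)) has_real_derivative
       (\<Sum>p\<in>P. Df \<theta> p * v p) + (\<Sum>p\<in>P. Dg \<theta> p * v p)) (at 0)"
      using f g unfolding LD_def by (intro DERIV_add) auto
    then show "((\<lambda>s. f (lin \<theta> v s) + g (lin \<theta> v s)) has_real_derivative
       (\<Sum>p\<in>P. (Df \<theta> p + Dg \<theta> p) * v p)) (at 0)"
      by (simp add: distrib_right sum.distrib)
  qed
qed

lemma LD_mult:
  assumes "LDx P f" "LDx P g"
  shows "LDx P (\<lambda>\<theta>. f \<theta> * g \<theta>)"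
proof -
  obtain Df Dg where f: "LD P f Df" and g: "LD P g Dg" using assms unfolding LDx_def by blast
  show ?thesis unfolding LDx_def LD_def
  proof (intro exI[of _ "\<lambda>\<theta> p. Df \<theta> p * g \<theta> + Dg \<theta> p * f \<theta>"] allI)
    fix \<theta> v :: "pidx \<Rightarrow> real"
    have "((\<lambda>s. f (lin \<theta> v s) * g (lin \<theta> v s)) has_real_derivative
       (\<Sum>p\<in>P. Df \<theta> p * v p) * g (lin \<theta> v 0) + (\<Sum>p\<in>P. Dg \<theta> p * v p) * f (lin \<theta> v 0)) (at 0)"
      using f g unfolding LD_def by (intro DERIV_mult) auto
    moreover have "(\<Sum>p\<in>P. (Df \<theta> p * g \<theta> + Dg \<theta> p * f \<theta>) * v p) =
      (\<Sum>p\<in>P. (Df \<theta> p * v p) * g \<theta> + (Dg \<theta> p * v p) * f \<theta>)"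
      by (rule sum.cong) (auto simp: algebra_simps)
    moreover have "(\<Sum>p\<in>P. (Df \<theta> p * v p) * g \<theta> + (Dg \<theta> p * v p) * f \<theta>) =
      (\<Sum>p\<in>P. Df \<theta> p * v p) * g (lin \<theta> v 0) + (\<Sum>p\<in>P. Dg \<theta> p * v p) * f (lin \<theta> v 0)"
      by (simp only: sum.distrib sum_distrib_right[symmetric] lin0)
    ultimately show "((\<lambda>s. f (lin \<theta> v s) * g (lin \<theta> v s)) has_real_derivative
       (\<Sum>p\<in>P. (Df \<theta> p * g \<theta> + Dg \<theta> p * f \<theta>) * v p)) (at 0)"
      by metis
  qed
qed

lemma LD_comp:
  assumes "\<forall>x. \<phi> differentiable at x" "LDx P f"
  shows "LDx P (\<lambda>\<theta>. \<phi> (f \<theta>))"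
proof -
  obtain Df where f: "LD P f Df" using assms unfolding LDx_def by blast
  show ?thesis unfolding LDx_def LD_def
  proof (intro exI[of _ "\<lambda>\<theta> p. deriv \<phi> (f \<theta>) * Df \<theta> p"] allI)
    fix \<theta> v :: "pidx \<Rightarrow> real"
    have d: "(\<phi> has_real_derivative deriv \<phi> (f (lin \<theta> v 0))) (at (f (lin \<theta> v 0)))"
      using assms(1) by (simp add: DERIV_deriv_iff_real_differentiable)
    have i: "((\<lambda>s. f (lin \<theta> v s)) has_real_derivative (\<Sum>p\<in>P. Df \<theta> p * v p)) (at 0)"
      using f unfolding LD_def by blast
    have "((\<phi> \<circ> (\<lambda>s. f (lin \<theta> v s))) has_real_derivative
       deriv \<phi> (f (lin \<theta> v 0)) * (\<Sum>p\<in>P. Df \<theta> p * v p)) (at 0)"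
      by (rule DERIV_chain[OF d i])
    then show "((\<lambda>s. \<phi> (f (lin \<theta> v s))) has_real_derivative
       (\<Sum>p\<in>P. deriv \<phi> (f \<theta>) * Df \<theta> p * v p)) (at 0)"
      by (simp add: o_def sum_distrib_left mult_ac)
  qed
qed

lemma LD_sum:
  assumes "finite S" "\<forall>j\<in>S. LDx P (f j)"
  shows "LDx P (\<lambda>\<theta>. \<Sum>j\<in>S. f j \<theta>)"
  using assms
proof (induction S rule: finite_induct)
  case empty
  then show ?case using LD_const[of P 0] by simp
next
  case (insert x F)
  then show ?case using LD_add[of P "f x" "\<lambda>\<theta>. \<Sum>j\<in>F. f j \<theta>"] by simp
qed

lemma LD_partial:
  assumes "finite P" "p \<in> P" "LD P f Df"
  shows "deriv (\<lambda>s. f (\<theta>(p := s))) (\<theta> p) = Df \<theta> p"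
proof -
  let ?v = "\<lambda>q. if q = p then 1 else 0 :: real"
  have "(\<Sum>q\<in>P. Df \<theta> q * ?v q) = (\<Sum>q\<in>P. if q = p then Df \<theta> p else 0)"
    by (rule sum.cong) auto
  also have "\<dots> = Df \<theta> p" using assms by simp
  finally have e: "(\<Sum>q\<in>P. Df \<theta> q * ?v q) = Df \<theta> p" .
  have l: "lin \<theta> ?v s = \<theta>(p := s + \<theta> p)" for s
    by (auto simp: lin_def fun_eq_iff)
  have "((\<lambda>s. f (lin \<theta> ?v s)) has_real_derivative Df \<theta> p) (at 0)"
    using assms(3) e unfolding LD_def by metis
  then have "((\<lambda>s. f (\<theta>(p := s + \<theta> p))) has_real_derivative Df \<theta> p) (at 0)"
    unfolding l .
  then have "((\<lambda>s. f (\<theta>(p := s))) has_real_derivative Df \<theta> p) (at (0 + \<theta> p))"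
    by (subst DERIV_shift) simp
  then show ?thesis by (intro DERIV_imp_deriv) simp
qed

lemma LD_jac:
  assumes "finite P" "LD P f Df"
  shows "LD P f (\<lambda>\<theta> p. deriv (\<lambda>s. f (\<theta>(p := s))) (\<theta> p))"
  using assms LD_partial[OF assms(1) _ assms(2)] unfolding LD_def
  by (metis (no_types, lifting) sum.cong)

lemma LD_line:
  assumes "LD P f Df"
  shows "((\<lambda>s. f (lin \<theta> v s)) has_real_derivative (\<Sum>p\<in>P. Df (lin \<theta> v s0) p * v p)) (at s0)"
proof -
  have l: "lin (lin \<theta> v s0) v h = lin \<theta> v (h + s0)" for h
    by (simp add: lin_def fun_eq_iff algebra_simps)
  have "((\<lambda>h. f (lin (lin \<theta> v s0) v h)) has_real_derivative (\<Sum>p\<in>P. Df (lin \<theta> v s0) p * v p)) (at 0)"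
    using assms unfolding LD_def by blast
  then have "((\<lambda>h. f (lin \<theta> v (h + s0))) has_real_derivative (\<Sum>p\<in>P. Df (lin \<theta> v s0) p * v p)) (at 0)"
    unfolding l .
  then have "((\<lambda>s. f (lin \<theta> v s)) has_real_derivative (\<Sum>p\<in>P. Df (lin \<theta> v s0) p * v p)) (at (0 + s0))"
    by (subst DERIV_shift) simp
  then show ?thesis by simp
qed

lemma params_finite: "finite (params L w)"
proof -
  let ?B = "\<Sum>l\<le>L. w l"
  have b: "w l \<le> ?B" if "l \<le> L" for l
    using that by (intro member_le_sum) auto
  have "{Wi l i j | l i j. 1 \<le> l \<and> l \<le> L \<and> i < w l \<and> j < w (l - 1)}
        \<subseteq> (\<lambda>(l, i, j). Wi l i j) ` ({..L} \<times> {..<?B} \<times> {..<?B})"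
  proof
    fix x assume "x \<in> {Wi l i j | l i j. 1 \<le> l \<and> l \<le> L \<and> i < w l \<and> j < w (l - 1)}"
    then obtain l i j where x: "x = Wi l i j" "1 \<le> l" "l \<le> L" "i < w l" "j < w (l - 1)" by blast
    have "i < ?B" using x b[of l] by linarith
    moreover have "j < ?B" using x b[of "l - 1"] by linarith
    ultimately show "x \<in> (\<lambda>(l, i, j). Wi l i j) ` ({..L} \<times> {..<?B} \<times> {..<?B})"
      using x by force
  qed
  moreover have "{Bi l i | l i. 1 \<le> l \<and> l \<le> L \<and> i < w l}
        \<subseteq> (\<lambda>(l, i). Bi l i) ` ({..L} \<times> {..<?B})"
  proof
    fix x assume "x \<in> {Bi l i | l i. 1 \<le> l \<and> l \<le> L \<and> i < w l}"
    then obtain l i where x: "x = Bi l i" "1 \<le> l" "l \<le> L" "i < w l" by blast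
    have "i < ?B" using x b[of l] by linarith
    then show "x \<in> (\<lambda>(l, i). Bi l i) ` ({..L} \<times> {..<?B})"
      using x by force
  qed
  ultimately show ?thesis unfolding params_def
    by (meson finite_SigmaI finite_Un finite_imageI finite_atMost finite_lessThan finite_subset)
qed

lemma hidden_LD:
  assumes d: "\<forall>x. \<phi> differentiable at x"
  shows "l < L \<Longrightarrow> i < w l \<Longrightarrow> LDx (params L w) (\<lambda>\<theta>. hidden \<phi> \<sigma>w \<sigma>b w \<theta> x l i)"
proof (induction l arbitrary: i)
  case 0
  then show ?case by (simp add: LD_const)
next
  case (Suc l)
  have fin: "finite (params L w)" by (rule params_finite)
  have IH: "\<forall>j\<in>{..<w l}. LDx (params L w) (\<lambda>\<theta>. hidden \<phi> \<sigma>w \<sigma>b w \<theta> x l j)"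
    using Suc by auto
  have W: "\<forall>j\<in>{..<w l}. LDx (params L w) (\<lambda>\<theta>. \<theta> (Wi (Suc l) i j))"
    using Suc.prems by (intro ballI LD_coord[OF fin]) (auto simp: params_def)
  have B: "LDx (params L w) (\<lambda>\<theta>. \<theta> (Bi (Suc l) i))"
    using Suc.prems by (intro LD_coord[OF fin]) (auto simp: params_def)
  have S: "LDx (params L w) (\<lambda>\<theta>. \<Sum>j<w l. \<theta> (Wi (Suc l) i j) * hidden \<phi> \<sigma>w \<sigma>b w \<theta> x l j)"
    using IH W by (intro LD_sum) (auto intro: LD_mult)
  have "LDx (params L w) (\<lambda>\<theta>. \<phi> (\<sigma>w / sqrt (real (w l)) * (\<Sum>j<w l. \<theta> (Wi (Suc l) i j) * hidden \<phi> \<sigma>w \<sigma>b w \<theta> x l j)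
      + \<sigma>b * \<theta> (Bi (Suc l) i)))"
    by (intro LD_comp[OF d] LD_add LD_mult LD_const S B)
  then show ?case by (simp add: preact_def)
qed

lemma netout_LD:
  assumes d: "\<forall>x. \<phi> differentiable at x" and L: "1 \<le> L" and c: "c < w L"
  shows "LDx (params L w) (\<lambda>\<theta>. netout \<phi> \<sigma>w \<sigma>b w L \<theta> x c)"
proof -
  have fin: "finite (params L w)" by (rule params_finite)
  have IH: "\<forall>j\<in>{..<w (L - 1)}. LDx (params L w) (\<lambda>\<theta>. hidden \<phi> \<sigma>w \<sigma>b w \<theta> x (L - 1) j)"
    using L by (auto intro!: hidden_LD[OF d])
  have W: "\<forall>j\<in>{..<w (L - 1)}. LDx (params L w) (\<lambda>\<theta>. \<theta> (Wi L c j))"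
    using L c by (intro ballI LD_coord[OF fin]) (auto simp: params_def)
  have B: "LDx (params L w) (\<lambda>\<theta>. \<theta> (Bi L c))"
    using L c by (intro LD_coord[OF fin]) (auto simp: params_def)
  have S: "LDx (params L w) (\<lambda>\<theta>. \<Sum>j<w (L - 1). \<theta> (Wi L c j) * hidden \<phi> \<sigma>w \<sigma>b w \<theta> x (L - 1) j)"
    using IH W by (intro LD_sum) (auto intro: LD_mult)
  have "LDx (params L w) (\<lambda>\<theta>. \<sigma>w / sqrt (real (w (L - 1))) * (\<Sum>j<w (L - 1). \<theta> (Wi L c j) * hidden \<phi> \<sigma>w \<sigma>b w \<theta> x (L - 1) j)
      + \<sigma>b * \<theta> (Bi L c))"
    by (intro LD_add LD_mult LD_const S B)
  then show ?thesis by (simp add: netout_def preact_def)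
qed

lemma sum_swap_mult:
  fixes a :: "'p \<Rightarrow> real"
  assumes "finite P" "finite K"
  shows "(\<Sum>p\<in>P. a p * (\<Sum>k\<in>K. b p k * c k)) = (\<Sum>k\<in>K. (\<Sum>p\<in>P. a p * b p k) * c k)"
proof -
  have "(\<Sum>p\<in>P. a p * (\<Sum>k\<in>K. b p k * c k)) = (\<Sum>p\<in>P. \<Sum>k\<in>K. a p * b p k * c k)"
    by (simp add: sum_distrib_left mult.assoc)
  also have "\<dots> = (\<Sum>k\<in>K. \<Sum>p\<in>P. a p * b p k * c k)"
    by (rule sum.swap)
  also have "\<dots> = (\<Sum>k\<in>K. (\<Sum>p\<in>P. a p * b p k) * c k)"
    by (simp add: sum_distrib_right)
  finally show ?thesis .
qed

lemma vnorm_sq: "vnorm I e * vnorm I e = (\<Sum>k\<in>I. e k * e k)"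
proof -
  have n: "0 \<le> (\<Sum>k\<in>I. e k * e k)" by (simp add: sum_nonneg)
  have "vnorm I e = sqrt (\<Sum>k\<in>I. e k * e k)" unfolding vnorm_def by (simp add: power2_eq_square)
  then show ?thesis using n by (simp add: real_sqrt_mult_self)
qed

lemma le_from_sq:
  fixes x B :: real
  assumes "x * x \<le> x * B" "0 \<le> x" "0 \<le> B"
  shows "x \<le> B"
proof (cases "x = 0")
  case True then show ?thesis using assms by simp
next
  case False then have "x > 0" using assms by simp
  then show ?thesis using assms(1) by (simp add: mult_le_cancel_left)
qed

lemma geo_bound:
  fixes \<rho> :: real
  assumes "0 \<le> \<rho>" "\<rho> < 1"
  shows "(\<Sum>j\<in>{1..t}. \<rho> ^ (j - 1)) * (1 - \<rho>) = 1 - \<rho> ^ t"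
proof (induction t)
  case 0 then show ?case by simp
next
  case (Suc t)
  have "(\<Sum>j\<in>{1..Suc t}. \<rho> ^ (j - 1)) = (\<Sum>j\<in>{1..t}. \<rho> ^ (j - 1)) + \<rho> ^ t" by simp
  then have "(\<Sum>j\<in>{1..Suc t}. \<rho> ^ (j - 1)) * (1 - \<rho>) = (\<Sum>j\<in>{1..t}. \<rho> ^ (j - 1)) * (1 - \<rho>) + \<rho> ^ t * (1 - \<rho>)"
    by (simp add: algebra_simps)
  also have "\<dots> = 1 - \<rho> ^ t + \<rho> ^ t * (1 - \<rho>)" using Suc.IH by simp
  also have "\<dots> = 1 - \<rho> ^ Suc t" by (simp add: algebra_simps)
  finally show ?case .
qed

lemma main_det:
  fixes PI :: "pidx set" and OI :: "'k set" and gf :: "(pidx \<Rightarrow> real) \<Rightarrow> 'k \<Rightarrow> real"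
    and Jf :: "(pidx \<Rightarrow> real) \<Rightarrow> 'k \<Rightarrow> pidx \<Rightarrow> real"
    and Qf :: "(pidx \<Rightarrow> real) \<Rightarrow> pidx \<Rightarrow> 'k \<Rightarrow> real"
    and \<Theta> :: "nat \<Rightarrow> pidx \<Rightarrow> real" and \<theta>z :: "pidx \<Rightarrow> real"
    and \<eta> \<alpha> K Rz A D sM r A' :: real and N :: nat
  assumes finPI: "finite PI" and finOI: "finite OI"
    and LDg: "\<forall>k\<in>OI. LD PI (\<lambda>\<theta>. gf \<theta> k) (\<lambda>\<theta> p. Jf \<theta> k p)"
    and Th0: "\<Theta> 0 = \<theta>z"
    and ThS: "\<forall>t. \<Theta> (Suc t) = (\<lambda>p. \<Theta> t p - \<eta> * (\<Sum>k\<in>OI. Qf (\<Theta> t) p k * gf (\<Theta> t) k) / real N)"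
    and Kb: "\<forall>\<theta>1 \<theta>2. vnorm PI (\<theta>1 - \<theta>z) < D \<and> vnorm PI (\<theta>2 - \<theta>z) < D \<longrightarrow>
         frob OI PI (Jf \<theta>1) \<le> K \<and>
         frob OI PI (\<lambda>k p. Jf \<theta>1 k p - Jf \<theta>2 k p) \<le> K * vnorm PI (\<theta>1 - \<theta>2) / sM"
    and Rzb: "vnorm OI (gf \<theta>z) < Rz"
    and iso: "\<forall>k\<in>OI. \<forall>k'\<in>OI. (\<Sum>p\<in>PI. Jf \<theta>z k p * Qf \<theta>z p k') / real N = \<alpha> * (if k = k' then 1 else 0)"
    and c2: "\<forall>\<theta>s. vnorm PI (\<theta>s - \<theta>z) < D \<longrightarrow>
         \<eta> / real N * opnorm PI OI (Qf \<theta>s) \<le> A \<and>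
         \<eta> / real N * opnorm PI OI (\<lambda>p k. Qf \<theta>z p k - Qf \<theta>s p k) \<le> A * vnorm PI (\<theta>s - \<theta>z) / sM"
    and pos: "0 < \<eta> * \<alpha>" "\<eta> * \<alpha> < 2" "\<eta> > 0" "N > 0" "A > 0" "K > 0" "Rz > 0" "sM > 0"
    and r_def: "r = \<bar>1 - \<eta> * \<alpha>\<bar>"
    and A'_def: "A' = 4 * K * A\<^sup>2 * Rz / (1 - \<bar>1 - \<eta> * \<alpha>\<bar>)"
    and D_def: "D = 2 * A * Rz / (1 - r) + 1"
    and rho: "r + A' / sM \<le> (1 + r) / 2"
  shows "\<forall>t. vnorm OI (gf (\<Theta> t)) \<le> (r + A' / sM) ^ t * Rz \<and>
           (\<Sum>j\<in>{1..t}. vnorm PI (\<Theta> j - \<Theta> (j - 1)))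
             \<le> A * Rz * (\<Sum>j\<in>{1..t}. (r + A' / sM) ^ (j - 1)) \<and>
           A * Rz * (\<Sum>j\<in>{1..t}. (r + A' / sM) ^ (j - 1)) \<le> 2 * A * Rz / (1 - r)"
proof -
  define \<rho> where "\<rho> = r + A' / sM"
  have r0: "0 \<le> r" and r1: "r < 1" using pos r_def by auto
  have A'nn: "0 \<le> A'" unfolding A'_def using pos r_def r1 by (simp add: divide_nonneg_pos)
  have cnn: "0 \<le> A' / sM" using A'nn pos by simp
  have \<rho>0: "0 \<le> \<rho>" using r0 cnn \<rho>_def by simp
  have \<rho>le: "\<rho> \<le> (1 + r) / 2" using rho \<rho>_def by simp
  have \<rho>1: "\<rho> < 1" using \<rho>le r1 by simp
  define D0 where "D0 = 2 * A * Rz / (1 - r)"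
  have D0nn: "0 \<le> D0" unfolding D0_def using pos r1 by simp
  have DD0: "D = D0 + 1" using D_def D0_def by simp
  have A'D0: "A' = 2 * K * A * D0"
    unfolding A'_def D0_def r_def[symmetric] by (simp add: power2_eq_square field_simps)
  define GS where "GS t = (\<Sum>j\<in>{1..t}. \<rho> ^ (j - 1))" for t
  have GS_Suc: "GS (Suc t) = GS t + \<rho> ^ t" for t unfolding GS_def by simp
  have GS_nn: "0 \<le> GS t" for t unfolding GS_def using \<rho>0 by (simp add: sum_nonneg)
  have GS_b: "A * Rz * GS t \<le> D0" for t
  proof -
    have e: "GS t * (1 - \<rho>) = 1 - \<rho> ^ t" unfolding GS_def by (rule geo_bound[OF \<rho>0 \<rho>1])
    have "GS t * (1 - \<rho>) \<le> 1" using e \<rho>0 by simp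
    moreover have "(1 - r) / 2 \<le> 1 - \<rho>" using \<rho>le by simp
    ultimately have "GS t * ((1 - r) / 2) \<le> 1"
      using GS_nn[of t] by (smt (verit) mult_left_mono)
    then have "GS t \<le> 2 / (1 - r)" using r1 by (simp add: field_simps)
    then have "A * Rz * GS t \<le> A * Rz * (2 / (1 - r))"
      using pos by (intro mult_left_mono) auto
    then show ?thesis unfolding D0_def by (simp add: mult_ac)
  qed
  define S where "S t = (\<Sum>j\<in>{1..t}. vnorm PI (\<Theta> j - \<Theta> (j - 1)))" for t
  have S_Suc: "S (Suc t) = S t + vnorm PI (\<Theta> (Suc t) - \<Theta> t)" for t unfolding S_def by simp
  have d00: "vnorm PI (\<theta>z - \<theta>z) = 0" by (simp add: vnorm_def)
  have J0K: "frob OI PI (Jf \<theta>z) \<le> K" using Kb[rule_format, of \<theta>z \<theta>z] DD0 D0nn d00 by auto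
  have step: "vnorm OI (gf (\<Theta> (Suc t))) \<le> \<rho> ^ Suc t * Rz \<and> S (Suc t) \<le> A * Rz * GS (Suc t)
      \<and> vnorm PI (\<Theta> (Suc t) - \<theta>z) \<le> S (Suc t)"
    if IH: "vnorm OI (gf (\<Theta> t)) \<le> \<rho> ^ t * Rz \<and> S t \<le> A * Rz * GS t \<and> vnorm PI (\<Theta> t - \<theta>z) \<le> S t"
    for t
  proof -
    define \<theta>t where "\<theta>t = \<Theta> t"
    define gt where "gt = gf \<theta>t"
    define Qt where "Qt = Qf \<theta>t"
    have IH1: "vnorm OI gt \<le> \<rho> ^ t * Rz" using IH unfolding gt_def \<theta>t_def by simp
    have dt: "vnorm PI (\<theta>t - \<theta>z) \<le> D0" using IH GS_b[of t] unfolding \<theta>t_def by linarith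
    then have dtD: "vnorm PI (\<theta>t - \<theta>z) < D" using DD0 by simp
    have qA: "\<eta> / real N * opnorm PI OI Qt \<le> A"
      and qL: "\<eta> / real N * opnorm PI OI (\<lambda>p k. Qf \<theta>z p k - Qt p k) \<le> A * vnorm PI (\<theta>t - \<theta>z) / sM"
      using c2 dtD unfolding Qt_def by auto
    define \<Delta> where "\<Delta> = (\<lambda>p. \<Theta> (Suc t) p - \<theta>t p)"
    have \<Delta>_eq: "\<Delta> p = - (\<eta> / real N) * mvmul OI Qt gt p" for p
      unfolding \<Delta>_def mvmul_def Qt_def gt_def \<theta>t_def using ThS by simp
    have \<Delta>_fun: "\<Theta> (Suc t) - \<Theta> t = \<Delta>" unfolding \<Delta>_def \<theta>t_def by (simp add: fun_eq_iff)
    have eN: "0 \<le> \<eta> / real N" using pos by simp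
    have n\<Delta>: "vnorm PI \<Delta> \<le> A * (\<rho> ^ t * Rz)"
    proof -
      have \<Delta>f: "\<Delta> = (\<lambda>p. - (\<eta> / real N) * mvmul OI Qt gt p)"
        by (rule ext) (rule \<Delta>_eq)
      have "vnorm PI \<Delta> = vnorm PI (\<lambda>p. - (\<eta> / real N) * mvmul OI Qt gt p)"
        by (simp only: \<Delta>f)
      also have "\<dots> = \<bar>- (\<eta> / real N)\<bar> * vnorm PI (mvmul OI Qt gt)"
        by (rule vnorm_scale)
      also have "\<dots> = \<eta> / real N * vnorm PI (mvmul OI Qt gt)"
        using eN by (simp only: abs_minus_cancel abs_of_nonneg)
      also have "\<dots> \<le> \<eta> / real N * (opnorm PI OI Qt * vnorm OI gt)"
        using mv_op[OF finOI] eN by (intro mult_left_mono) auto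
      also have "\<dots> = (\<eta> / real N * opnorm PI OI Qt) * vnorm OI gt" by simp
      also have "\<dots> \<le> A * vnorm OI gt" using qA vnorm_nonneg by (intro mult_right_mono) auto
      also have "\<dots> \<le> A * (\<rho> ^ t * Rz)" using IH1 pos by (intro mult_left_mono) auto
      finally show ?thesis .
    qed
    have S1: "S (Suc t) \<le> A * Rz * GS (Suc t)"
      using IH n\<Delta> S_Suc[of t] GS_Suc[of t] \<Delta>_fun by (simp add: algebra_simps)
    have S1D: "S (Suc t) \<le> D0" using S1 GS_b[of "Suc t"] by linarith
    have d1: "vnorm PI (\<Theta> (Suc t) - \<theta>z) \<le> S (Suc t)"
    proof -
      have "\<Theta> (Suc t) - \<theta>z = (\<lambda>p. (\<theta>t - \<theta>z) p + \<Delta> p)" unfolding \<Delta>_def by (simp add: fun_eq_iff)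
      then have "vnorm PI (\<Theta> (Suc t) - \<theta>z) \<le> vnorm PI (\<theta>t - \<theta>z) + vnorm PI \<Delta>"
        using vnorm_triangle by metis
      then show ?thesis using IH S_Suc[of t] \<Delta>_fun unfolding \<theta>t_def by simp
    qed
    define e where "e = (\<lambda>k. gf (\<Theta> (Suc t)) k - (1 - \<eta> * \<alpha>) * gt k)"
    define \<psi> where "\<psi> = (\<lambda>s. \<Sum>k\<in>OI. e k * gf (lin \<theta>t \<Delta> s) k)"
    define \<psi>' where "\<psi>' = (\<lambda>s. \<Sum>k\<in>OI. e k * (\<Sum>p\<in>PI. Jf (lin \<theta>t \<Delta> s) k p * \<Delta> p))"
    have dpsi: "(\<psi> has_real_derivative \<psi>' s) (at s)" for s
      unfolding \<psi>_def \<psi>'_def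
      by (intro DERIV_sum DERIV_cmult) (use LDg LD_line in blast)
    obtain \<xi> where \<xi>: "0 < \<xi>" "\<xi> < 1" "\<psi> 1 - \<psi> 0 = (1 - 0) * \<psi>' \<xi>"
      using MVT2[of 0 1 \<psi> \<psi>'] dpsi by auto
    have lin1: "lin \<theta>t \<Delta> 1 = \<Theta> (Suc t)" unfolding lin_def \<Delta>_def by (simp add: fun_eq_iff)
    define \<theta>\<xi> where "\<theta>\<xi> = lin \<theta>t \<Delta> \<xi>"
    have d\<xi>: "vnorm PI (\<theta>\<xi> - \<theta>z) \<le> D0"
    proof -
      have "\<theta>\<xi> - \<theta>z = (\<lambda>p. (\<theta>t - \<theta>z) p + \<xi> * \<Delta> p)" unfolding \<theta>\<xi>_def lin_def by (simp add: fun_eq_iff)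
      then have h1: "vnorm PI (\<theta>\<xi> - \<theta>z) \<le> vnorm PI (\<theta>t - \<theta>z) + vnorm PI (\<lambda>p. \<xi> * \<Delta> p)"
        using vnorm_triangle by metis
      have h2: "vnorm PI (\<lambda>p. \<xi> * \<Delta> p) = \<xi> * vnorm PI \<Delta>" using \<xi> by (simp add: vnorm_scale)
      have h3: "\<xi> * vnorm PI \<Delta> \<le> vnorm PI \<Delta>" using \<xi> vnorm_nonneg[of PI \<Delta>]
        by (simp add: mult_left_le_one_le)
      have "vnorm PI (\<theta>\<xi> - \<theta>z) \<le> vnorm PI (\<theta>t - \<theta>z) + vnorm PI \<Delta>" using h1 h2 h3 by linarith
      then show ?thesis using IH S_Suc[of t] \<Delta>_fun S1D unfolding \<theta>t_def by simp
    qed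
    have Jdiff: "frob OI PI (\<lambda>k p. Jf \<theta>\<xi> k p - Jf \<theta>z k p) \<le> K * D0 / sM"
    proof -
      have "frob OI PI (\<lambda>k p. Jf \<theta>\<xi> k p - Jf \<theta>z k p) \<le> K * vnorm PI (\<theta>\<xi> - \<theta>z) / sM"
        using Kb[rule_format, of \<theta>\<xi> \<theta>z] d\<xi> DD0 d00 D0nn by auto
      also have "\<dots> \<le> K * D0 / sM" using d\<xi> pos by (simp add: divide_right_mono)
      finally show ?thesis .
    qed
    define u where "u = (\<lambda>p. \<eta> / real N * mvmul OI (\<lambda>p k. Qf \<theta>z p k - Qt p k) gt p)"
    have nu: "vnorm PI u \<le> A * D0 / sM * (\<rho> ^ t * Rz)"
    proof -
      have "vnorm PI u = \<bar>\<eta> / real N\<bar> * vnorm PI (mvmul OI (\<lambda>p k. Qf \<theta>z p k - Qt p k) gt)"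
        unfolding u_def by (rule vnorm_scale)
      also have "\<dots> = \<eta> / real N * vnorm PI (mvmul OI (\<lambda>p k. Qf \<theta>z p k - Qt p k) gt)"
        using eN by (simp only: abs_of_nonneg)
      also have "\<dots> \<le> \<eta> / real N * (opnorm PI OI (\<lambda>p k. Qf \<theta>z p k - Qt p k) * vnorm OI gt)"
        using mv_op[OF finOI] eN by (intro mult_left_mono) auto
      also have "\<dots> = (\<eta> / real N * opnorm PI OI (\<lambda>p k. Qf \<theta>z p k - Qt p k)) * vnorm OI gt" by simp
      also have "\<dots> \<le> (A * vnorm PI (\<theta>t - \<theta>z) / sM) * vnorm OI gt"
        using qL vnorm_nonneg by (intro mult_right_mono) auto
      also have "\<dots> \<le> (A * D0 / sM) * (\<rho> ^ t * Rz)"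
        using dt IH1 pos vnorm_nonneg[of OI gt] vnorm_nonneg[of PI "\<theta>t - \<theta>z"]
        by (intro mult_mono divide_right_mono mult_left_mono) auto
      finally show ?thesis .
    qed
    have isoN: "(\<Sum>p\<in>PI. Jf \<theta>z k p * Qf \<theta>z p k') = real N * \<alpha> * (if k = k' then 1 else 0)"
      if "k \<in> OI" "k' \<in> OI" for k k'
      using iso that pos by (simp add: field_simps)
    have J0\<Delta>: "(\<Sum>p\<in>PI. Jf \<theta>z k p * \<Delta> p) = - (\<eta> * \<alpha>) * gt k + mvmul PI (Jf \<theta>z) u k"
      if k: "k \<in> OI" for k
    proof -
      have "\<Delta> p = - (\<eta> / real N) * (\<Sum>k'\<in>OI. Qf \<theta>z p k' * gt k') + u p" for p
        unfolding \<Delta>_eq u_def mvmul_def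
        by (simp add: sum_subtractf left_diff_distrib right_diff_distrib)
      then have "(\<Sum>p\<in>PI. Jf \<theta>z k p * \<Delta> p) =
         - (\<eta> / real N) * (\<Sum>p\<in>PI. Jf \<theta>z k p * (\<Sum>k'\<in>OI. Qf \<theta>z p k' * gt k')) + (\<Sum>p\<in>PI. Jf \<theta>z k p * u p)"
        by (simp add: distrib_left sum.distrib sum_distrib_left mult_ac)
      also have "(\<Sum>p\<in>PI. Jf \<theta>z k p * (\<Sum>k'\<in>OI. Qf \<theta>z p k' * gt k')) =
          (\<Sum>k'\<in>OI. (\<Sum>p\<in>PI. Jf \<theta>z k p * Qf \<theta>z p k') * gt k')"
        by (rule sum_swap_mult[OF finPI finOI])
      also have "\<dots> = (\<Sum>k'\<in>OI. (if k = k' then real N * \<alpha> * gt k' else 0))"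
        using isoN k by (intro sum.cong) auto
      also have "\<dots> = real N * \<alpha> * gt k" using k finOI by simp
      finally show ?thesis using pos unfolding mvmul_def by simp
    qed
    have J\<xi>\<Delta>: "(\<Sum>p\<in>PI. Jf \<theta>\<xi> k p * \<Delta> p) =
        mvmul PI (\<lambda>k p. Jf \<theta>\<xi> k p - Jf \<theta>z k p) \<Delta> k + (\<Sum>p\<in>PI. Jf \<theta>z k p * \<Delta> p)" for k
      unfolding mvmul_def by (simp add: left_diff_distrib sum_subtractf)
    define a where "a = mvmul PI (\<lambda>k p. Jf \<theta>\<xi> k p - Jf \<theta>z k p) \<Delta>"
    define b where "b = mvmul PI (Jf \<theta>z) u"
    have ee: "(\<Sum>k\<in>OI. e k * e k) = (\<Sum>k\<in>OI. e k * (a k + b k))"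
    proof -
      have E1: "(\<Sum>k\<in>OI. e k * e k) = (\<psi> 1 - \<psi> 0) + \<eta> * \<alpha> * (\<Sum>k\<in>OI. e k * gt k)"
        unfolding \<psi>_def lin1 lin0 e_def gt_def
        by (simp add: sum_distrib_left sum_subtractf[symmetric] sum.distrib[symmetric] algebra_simps)
      have pw: "(\<Sum>p\<in>PI. Jf \<theta>\<xi> k p * \<Delta> p) = a k - (\<eta> * \<alpha>) * gt k + b k" if "k \<in> OI" for k
        using J\<xi>\<Delta>[of k] J0\<Delta>[OF that] unfolding a_def b_def by simp
      have E2: "\<psi>' \<xi> = (\<Sum>k\<in>OI. e k * (a k - (\<eta> * \<alpha>) * gt k + b k))"
        unfolding \<psi>'_def \<theta>\<xi>_def[symmetric] using pw by (intro sum.cong) auto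
      have E3: "\<psi> 1 - \<psi> 0 = \<psi>' \<xi>" using \<xi>(3) by simp
      have E4: "(\<Sum>k\<in>OI. e k * (a k - (\<eta> * \<alpha>) * gt k + b k)) + \<eta> * \<alpha> * (\<Sum>k\<in>OI. e k * gt k)
          = (\<Sum>k\<in>OI. e k * (a k + b k))"
        by (simp add: algebra_simps sum.distrib sum_subtractf sum_distrib_left)
      show ?thesis using E1 E2 E3 E4 by linarith
    qed
    have na: "vnorm OI a \<le> K * D0 / sM * (A * (\<rho> ^ t * Rz))"
    proof -
      have "vnorm OI a \<le> frob OI PI (\<lambda>k p. Jf \<theta>\<xi> k p - Jf \<theta>z k p) * vnorm PI \<Delta>"
        unfolding a_def by (rule mv_frob)
      also have "\<dots> \<le> K * D0 / sM * (A * (\<rho> ^ t * Rz))"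
        using Jdiff n\<Delta> vnorm_nonneg[of PI \<Delta>] pos D0nn
        by (intro mult_mono) auto
      finally show ?thesis .
    qed
    have nb: "vnorm OI b \<le> K * (A * D0 / sM * (\<rho> ^ t * Rz))"
    proof -
      have "vnorm OI b \<le> frob OI PI (Jf \<theta>z) * vnorm PI u"
        unfolding b_def by (rule mv_frob)
      also have "\<dots> \<le> K * (A * D0 / sM * (\<rho> ^ t * Rz))"
        using J0K nu vnorm_nonneg[of PI u] pos
        by (intro mult_mono) auto
      finally show ?thesis .
    qed
    define B where "B = A' / sM * (\<rho> ^ t * Rz)"
    have Beq: "K * D0 / sM * (A * (\<rho> ^ t * Rz)) + K * (A * D0 / sM * (\<rho> ^ t * Rz)) = B"
      unfolding B_def A'D0 by (simp add: field_simps)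
    have Bnn: "0 \<le> B" unfolding B_def using cnn \<rho>0 pos by (intro mult_nonneg_nonneg) auto
    have "vnorm OI e * vnorm OI e \<le> vnorm OI e * B"
    proof -
      have "vnorm OI e * vnorm OI e = (\<Sum>k\<in>OI. e k * (a k + b k))" using ee vnorm_sq by metis
      also have "\<dots> \<le> vnorm OI e * vnorm OI (\<lambda>k. a k + b k)" using cs by (metis abs_le_D1)
      also have "\<dots> \<le> vnorm OI e * (vnorm OI a + vnorm OI b)"
        using vnorm_triangle vnorm_nonneg by (intro mult_left_mono) auto
      also have "\<dots> \<le> vnorm OI e * B"
      proof -
        have "vnorm OI a + vnorm OI b \<le> B" using na nb Beq by linarith
        then show ?thesis using vnorm_nonneg by (intro mult_left_mono) auto
      qed
      finally show ?thesis .
    qed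
    then have ne: "vnorm OI e \<le> B" using le_from_sq vnorm_nonneg Bnn by blast
    have "vnorm OI (gf (\<Theta> (Suc t))) = vnorm OI (\<lambda>k. e k + (1 - \<eta> * \<alpha>) * gt k)"
      unfolding e_def by simp
    also have "\<dots> \<le> vnorm OI e + vnorm OI (\<lambda>k. (1 - \<eta> * \<alpha>) * gt k)" by (rule vnorm_triangle)
    also have "\<dots> = vnorm OI e + r * vnorm OI gt" using r_def by (simp add: vnorm_scale)
    also have "\<dots> \<le> B + r * (\<rho> ^ t * Rz)" using ne IH1 r0 by (intro add_mono mult_left_mono) auto
    also have "\<dots> = \<rho> ^ Suc t * Rz" unfolding B_def \<rho>_def by (simp add: algebra_simps)
    finally show ?thesis using S1 d1 by simp
  qed
  have all: "vnorm OI (gf (\<Theta> t)) \<le> \<rho> ^ t * Rz \<and> S t \<le> A * Rz * GS t \<and> vnorm PI (\<Theta> t - \<theta>z) \<le> S t" for t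
  proof (induction t)
    case 0
    then show ?case using Rzb Th0 d00 unfolding S_def GS_def by (simp add: vnorm_def)
  next
    case (Suc t)
    then show ?case using step by blast
  qed
  show ?thesis
  proof
    fix t
    show "vnorm OI (gf (\<Theta> t)) \<le> (r + A' / sM) ^ t * Rz \<and>
           (\<Sum>j\<in>{1..t}. vnorm PI (\<Theta> j - \<Theta> (j - 1)))
             \<le> A * Rz * (\<Sum>j\<in>{1..t}. (r + A' / sM) ^ (j - 1)) \<and>
           A * Rz * (\<Sum>j\<in>{1..t}. (r + A' / sM) ^ (j - 1)) \<le> 2 * A * Rz / (1 - r)"
      using all[of t] GS_b[of t] unfolding S_def GS_def \<rho>_def D0_def by simp
  qed
qed

lemma LD_minus_const:
  assumes "LD P f Df"
  shows "LD P (\<lambda>\<theta>. f \<theta> - c) Df"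
  using assms unfolding LD_def
  by (auto intro: DERIV_diff[where E=0, simplified] DERIV_const)

theorem theoremA2:
  fixes \<phi> :: "real \<Rightarrow> real" and \<sigma>w \<sigma>b :: real
    and L C N M0 :: nat and \<alpha>w :: "nat \<Rightarrow> real"
    and xs :: "nat \<Rightarrow> nat \<Rightarrow> real" and y :: "nat \<times> nat \<Rightarrow> real"
    and G :: "nat \<Rightarrow> (pidx \<Rightarrow> real) \<Rightarrow> pidx \<Rightarrow> pidx \<Rightarrow> real"
    and \<eta> \<alpha> K R0 A :: real
  defines "PI \<equiv> \<lambda>M. params L (width M0 C L \<alpha>w M)"
    and "OI \<equiv> outs N C"
    and "F \<equiv> \<lambda>M. fvec \<phi> \<sigma>w \<sigma>b (width M0 C L \<alpha>w M) L xs"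
    and "g \<equiv> \<lambda>M \<theta> k. fvec \<phi> \<sigma>w \<sigma>b (width M0 C L \<alpha>w M) L xs \<theta> k - y k"
    and "J \<equiv> \<lambda>M \<theta>. jac (fvec \<phi> \<sigma>w \<sigma>b (width M0 C L \<alpha>w M) L xs) \<theta>"
    and "Q \<equiv> \<lambda>M \<theta>. ginvJT (params L (width M0 C L \<alpha>w M)) (outs N C) (G M \<theta>) (jac (fvec \<phi> \<sigma>w \<sigma>b (width M0 C L \<alpha>w M) L xs) \<theta>)"
    and "\<mu> \<equiv> \<lambda>M. init_law (params L (width M0 C L \<alpha>w M))"
    and "\<Theta> \<equiv> \<lambda>M \<theta>0. ngd (params L (width M0 C L \<alpha>w M)) (outs N C) N \<eta> (fvec \<phi> \<sigma>w \<sigma>b (width M0 C L \<alpha>w M) L xs)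
                (\<lambda>\<theta> k. fvec \<phi> \<sigma>w \<sigma>b (width M0 C L \<alpha>w M) L xs \<theta> k - y k) (G M) \<theta>0"
    and "r \<equiv> \<bar>1 - \<eta> * \<alpha>\<bar>"
    and "A' \<equiv> 4 * K * A\<^sup>2 * R0 / (1 - \<bar>1 - \<eta> * \<alpha>\<bar>)"
  assumes L: "L \<ge> 1" and C: "C \<ge> 1" and N: "N \<ge> 1"
    and widths: "\<forall>l. 1 \<le> l \<and> l < L \<longrightarrow> \<alpha>w l > 0"
    and act: "activation_ok \<phi>"
    and data_norm: "\<forall>n<N. vnorm {..<M0} (xs n) = 1"
    and data_distinct: "\<forall>n<N. \<forall>n'<N. n \<noteq> n' \<longrightarrow> (\<exists>j<M0. xs n j \<noteq> xs n' j)"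
    and K_pos: "K > 0"
    and K_bound: "\<forall>D>0. whp \<mu> (\<lambda>M \<theta>0. \<forall>\<theta>1 \<theta>2.
         vnorm (PI M) (\<theta>1 - \<theta>0) < D \<and> vnorm (PI M) (\<theta>2 - \<theta>0) < D \<longrightarrow>
         frob OI (PI M) (J M \<theta>1) \<le> K \<and>
         frob OI (PI M) (\<lambda>k p. J M \<theta>1 k p - J M \<theta>2 k p)
           \<le> K * vnorm (PI M) (\<theta>1 - \<theta>2) / sqrt (real M))"
    and R0_pos: "R0 > 0"
    and R0_bound: "whp \<mu> (\<lambda>M \<theta>0. vnorm OI (g M \<theta>0) < R0)"
    and cond1_pos: "\<alpha> > 0"
    and cond1: "whp \<mu> (\<lambda>M \<theta>0. \<forall>k\<in>OI. \<forall>k'\<in>OI.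
         (\<Sum>p\<in>PI M. J M \<theta>0 k p * Q M \<theta>0 p k') / real N = \<alpha> * (if k = k' then 1 else 0))"
    and cond2_pos: "A > 0"
    and cond2: "\<forall>D>0. whp \<mu> (\<lambda>M \<theta>0. \<forall>\<theta>s. vnorm (PI M) (\<theta>s - \<theta>0) < D \<longrightarrow>
         \<eta> / real N * opnorm (PI M) OI (Q M \<theta>s) \<le> A \<and>
         \<eta> / real N * opnorm (PI M) OI (\<lambda>p k. Q M \<theta>0 p k - Q M \<theta>s p k)
           \<le> A * vnorm (PI M) (\<theta>s - \<theta>0) / sqrt (real M))"
    and step: "0 < \<eta> * \<alpha>" "\<eta> * \<alpha> < 2"
  shows "whp \<mu> (\<lambda>M \<theta>0. \<forall>t.
           vnorm OI (g M (\<Theta> M \<theta>0 t)) \<le> (r + A' / sqrt (real M)) ^ t * R0 \<and>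
           (\<Sum>j\<in>{1..t}. vnorm (PI M) (\<Theta> M \<theta>0 j - \<Theta> M \<theta>0 (j - 1)))
             \<le> A * R0 * (\<Sum>j\<in>{1..t}. (r + A' / sqrt (real M)) ^ (j - 1)) \<and>
           A * R0 * (\<Sum>j\<in>{1..t}. (r + A' / sqrt (real M)) ^ (j - 1)) \<le> 2 * A * R0 / (1 - r))"
proof -
  have diff: "\<forall>x. \<phi> differentiable at x" using act unfolding activation_ok_def by blast
  have r1: "\<bar>1 - \<eta> * \<alpha>\<bar> < 1" using step by auto
  have r1': "r < 1" using r1 unfolding r_def .
  have r0: "0 \<le> r" unfolding r_def by simp
  have \<eta>0: "\<eta> > 0" using step(1) cond1_pos by (simp add: zero_less_mult_iff)
  define D where "D = 2 * A * R0 / (1 - r) + 1"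
  have "0 \<le> 2 * A * R0 / (1 - r)" using r1' cond2_pos R0_pos by (intro divide_nonneg_nonneg) auto
  then have Dpos: "D > 0" unfolding D_def by linarith
  have ps: "\<And>M. prob_space (\<mu> M)" unfolding \<mu>_def by (rule prob_init)
  have A'pos: "A' > 0" unfolding A'_def using K_pos cond2_pos R0_pos r1 by simp
  have LDg: "\<forall>k\<in>OI. LD (PI M) (\<lambda>\<theta>. g M \<theta> k) (\<lambda>\<theta> p. J M \<theta> k p)" for M
  proof
    fix k assume k: "k \<in> OI"
    obtain n c where kc: "k = (n, c)" "c < C" using k unfolding OI_def outs_def by auto
    define w where "w = width M0 C L \<alpha>w M"
    have wL: "w L = C" unfolding w_def width_def using L by simp
    have "LDx (params L w) (\<lambda>\<theta>. netout \<phi> \<sigma>w \<sigma>b w L \<theta> (xs n) c)"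
      using netout_LD[OF diff L] kc wL by simp
    then obtain Df where "LD (params L w) (\<lambda>\<theta>. fvec \<phi> \<sigma>w \<sigma>b w L xs \<theta> k) Df"
      unfolding LDx_def fvec_def kc by auto
    then have "LD (params L w) (\<lambda>\<theta>. fvec \<phi> \<sigma>w \<sigma>b w L xs \<theta> k)
        (\<lambda>\<theta> p. deriv (\<lambda>s. fvec \<phi> \<sigma>w \<sigma>b w L xs (\<theta>(p := s)) k) (\<theta> p))"
      by (intro LD_jac params_finite)
    then have "LD (params L w) (\<lambda>\<theta>. fvec \<phi> \<sigma>w \<sigma>b w L xs \<theta> k - y k)
        (\<lambda>\<theta> p. deriv (\<lambda>s. fvec \<phi> \<sigma>w \<sigma>b w L xs (\<theta>(p := s)) k) (\<theta> p))"
      by (rule LD_minus_const)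
    then show "LD (PI M) (\<lambda>\<theta>. g M \<theta> k) (\<lambda>\<theta> p. J M \<theta> k p)"
      unfolding PI_def g_def J_def jac_def w_def by simp
  qed
  note w1 = whp_conj[OF ps K_bound[rule_format, OF Dpos] cond2[rule_format, OF Dpos]]
  note w2 = whp_conj[OF ps w1 whp_conj[OF ps R0_bound cond1]]
  have ev: "\<forall>\<^sub>F M in sequentially. 0 < M \<and> r + A' / sqrt (real M) \<le> (1 + r) / 2"
  proof -
    define N0 where "N0 = nat \<lceil>(2 * A' / (1 - r))\<^sup>2\<rceil> + 1"
    have "0 < M \<and> r + A' / sqrt (real M) \<le> (1 + r) / 2" if M: "M \<ge> N0" for M
    proof -
      have Mpos: "0 < M" using M unfolding N0_def by simp
      have "(2 * A' / (1 - r))\<^sup>2 \<le> real M" using M unfolding N0_def by linarith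
      then have "sqrt ((2 * A' / (1 - r))\<^sup>2) \<le> sqrt (real M)" by (rule real_sqrt_le_mono)
      then have s: "2 * A' / (1 - r) \<le> sqrt (real M)" using A'pos r1' by simp
      have sp: "0 < sqrt (real M)" using Mpos by simp
      have "A' / sqrt (real M) \<le> A' / (2 * A' / (1 - r))"
        using A'pos r1' sp by (intro divide_left_mono[OF s]) (auto intro!: mult_pos_pos)
      also have "\<dots> = (1 - r) / 2" using A'pos by (simp add: field_simps)
      finally show ?thesis using Mpos by simp
    qed
    then show ?thesis unfolding eventually_sequentially by blast
  qed
  show ?thesis
  proof (rule whp_mono[OF w2], rule eventually_mono[OF ev], rule allI, rule impI, goal_cases)
    case (1 M \<theta>0)
    note Mh = 1(1)
    note H = 1(2)
    show ?case
    proof -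
      have finPI: "finite (PI M)" unfolding PI_def by (rule params_finite)
      have finOI: "finite OI" unfolding OI_def outs_def by simp
      have Th0: "\<Theta> M \<theta>0 0 = \<theta>0" unfolding \<Theta>_def by simp
      have ThS: "\<forall>t. \<Theta> M \<theta>0 (Suc t) = (\<lambda>p. \<Theta> M \<theta>0 t p - \<eta> * (\<Sum>k\<in>OI. Q M (\<Theta> M \<theta>0 t) p k * g M (\<Theta> M \<theta>0 t) k) / real N)"
        unfolding \<Theta>_def Q_def g_def OI_def by (simp add: Let_def)
      have Mpos: "0 < sqrt (real M)" using Mh by simp
      show ?thesis
        apply (rule main_det[where PI="PI M" and OI=OI and gf="g M" and Jf="J M" and Qf="Q M"
              and \<Theta>="\<Theta> M \<theta>0" and \<theta>z=\<theta>0 and \<eta>=\<eta> and \<alpha>=\<alpha> and K=K and Rz=R0 and A=A and D=D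
              and sM="sqrt (real M)" and r=r and A'=A' and N=N])
        using finPI finOI LDg[of M] Th0 ThS H Mh Mpos step \<eta>0 N cond2_pos K_pos R0_pos r_def A'_def D_def
        by auto
    qed
  qed
qed

end
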